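(* Let Assumptions (A1), (A3), (A4) and (A15) below hold, let $C\in\mathbb{R}$, and assume that $\Pi^\star$ is minimal. Then there exist $N_0\in\mathbb{N}$ and $\delta_2\in\mathcal L$ such that for all $x,y\in\mathbb{X}_{\mathrm{pi}}(C,N_0)$ and all $N\ge N_0$ $$\tilde V_N^\beta(y)-\lambda(y)-\tilde V_N^\beta(x)+\lambda(x)\le V_N^\beta(y)-V_N^\beta(x)+\delta_2(N).$$
   Context: System $x(k+1)=f(x(k),u(k))$ with constraint sets $\mathbb{X}\subset\mathbb{R}^n$, $\mathbb{U}\subset\mathbb{R}^m$ and stage cost $\ell:\mathbb{X}\times\mathbb{U}\to\mathbb{R}$, which is assumed non-negative. For $u\in\mathbb{U}^T$, $x_u(0,x)=x$, $x_u(k+1,x)=f(x_u(k,x),u(k))$; $\mathbb{U}^T(x)$ is the set of $u\in\mathbb{U}^T$ with $x_u(k,x)\in\mathbb{X}$ for $k=0,\dots,T$. A feasible $p$-periodic orbit is $\Pi\in(\mathbb{X}\times\mathbb{U})^p$ with $\Pi_\mathbb{X}([k+1]_p)=f(\Pi(k))$ ($[k]_p$ = $k$ mod $p$); it is minimal if $\Pi_\mathbb{X}(k)=\Pi_\mathbb{X}(j)$ implies $k=j$. $\|(x,u)\|_\Pi:=\min_k\|(x,u)-\Pi(k)\|$, $\|x\|_{\Pi_\mathbb{X}}:=\min_k\|x-\Pi_\mathbb{X}(k)\|$; $\ell^\star:=\inf$ over all feasible periodic orbits of $\frac1p\sum_{k=0}^{p-1}\ell(\Pi(k))$; $\Pi^\star$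 is a fixed feasible $p^\star$-periodic orbit attaining $\ell^\star$. $\mathcal L$: continuous decreasing functions $[0,\infty)\to[0,\infty)$ tending to $0$. (A1) $f,\ell$ continuous, $\mathbb{X},\mathbb{U}$ compact. (A3) There are $\lambda:\mathbb{X}\to\mathbb{R}$, $\bar\lambda$ with $|\lambda|\le\bar\lambda$ on $\mathbb{X}$, and $\underline\alpha_{\tilde\ell}\in\mathcal K_\infty$ such that $\tilde\ell(x,u):=\ell(x,u)-\ell^\star+\lambda(x)-\lambda(f(x,u))\ge\underline\alpha_{\tilde\ell}(\|(x,u)\|_{\Pi^\star})$ for all $x\in\mathbb{X}$, $u\in\mathbb{U}^1(x)$. (A4) There are $\kappa>0$, $M'\in\mathbb{N}$, $\rho\in\mathcal K_\infty$ such that for all $z\in\{\Pi^\star_\mathbb{X}(k)\}$ and $x,y\in\mathbb{X}$ with $\|x-z\|,\|y-z\|\le\kappa$ there is $u\in\mathbb{U}^{M'}(x)$ with $x_u(M',x)=y$ and $\|(x_u(k,x),u(k))\|_{\Pi^\star}\le\rho(\max\{\|x\|_{\Pi^\star_\mathbb{X}},\|y\|_{\Pi^\star_\mathbb{X}}\})$ for $k=0,\dots,M'-1$. (A15) $\lambda$ is continuous and there is $\overline\alpha_\lambda\in\mathcal K_\infty$ with $|\lambda(x)-\lambda(\Pi^\star_\mathbb{X}(k))|\le\overline\alpha_\lambda(\|x-\Pi^\star_\mathbb{X}(k)\|)$ for all $x\in\mathbb{X}$, $k=0,\dots,p^\star-1$. Discounted MPC: $\beta_N(k)=\frac{N-k}{N}$,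 $V_N^\beta(x)=\inf_{u\in\mathbb{U}^N(x)}\sum_{k=0}^{N-1}\beta_N(k)\ell(x_u(k,x),u(k))$ and $\tilde V_N^\beta(x)=\inf_{u\in\mathbb{U}^N(x)}\sum_{k=0}^{N-1}\beta_N(k)\tilde\ell(x_u(k,x),u(k))$. $\mathbb{X}_{\mathrm{pi}}(C,N_0)$ is the set of $x\in\mathbb{X}$ with $V_N^\beta(x)-\frac{N+1}{2}\ell^\star+\lambda(x)+\bar\lambda\le C$ for all $N\ge N_0$. *)

theory Defs
  imports "HOL-Analysis.Analysis"
begin

fun traj :: "('x \<Rightarrow> 'u \<Rightarrow> 'x) \<Rightarrow> (nat \<Rightarrow> 'u) \<Rightarrow> 'x \<Rightarrow> nat \<Rightarrow> 'x" where
  "traj f u x 0 = x"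
| "traj f u x (Suc k) = f (traj f u x k) (u k)"

text \<open>Admissible control sequences U^T(x) (only the first T entries matter).\<close>
definition adm :: "('x \<Rightarrow> 'u \<Rightarrow> 'x) \<Rightarrow> 'x set \<Rightarrow> 'u set \<Rightarrow> nat \<Rightarrow> 'x \<Rightarrow> (nat \<Rightarrow> 'u) set" where
  "adm f X U T x = {u. (\<forall>k<T. u k \<in> U) \<and> (\<forall>k\<le>T. traj f u x k \<in> X)}"

definition feasible_orbit :: "('x \<Rightarrow> 'u \<Rightarrow> 'x) \<Rightarrow> 'x set \<Rightarrow> 'u set \<Rightarrow> nat \<Rightarrow> (nat \<Rightarrow> 'x \<times> 'u) \<Rightarrow> bool" where
  "feasible_orbit f X U p Orb \<longleftrightarrow> p > 0 \<and>
     (\<forall>k<p. Orb k \<in> X \<times> U \<and> fst (Orb (Suc k mod p)) = f (fst (Orb k)) (snd (Orb k)))"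

definition minimal_orbit :: "nat \<Rightarrow> (nat \<Rightarrow> 'x \<times> 'u) \<Rightarrow> bool" where
  "minimal_orbit p Orb \<longleftrightarrow> (\<forall>k<p. \<forall>j<p. fst (Orb k) = fst (Orb j) \<longrightarrow> k = j)"

definition orbit_avg :: "('x \<Rightarrow> 'u \<Rightarrow> real) \<Rightarrow> nat \<Rightarrow> (nat \<Rightarrow> 'x \<times> 'u) \<Rightarrow> real" where
  "orbit_avg l p Orb = (1 / real p) * (\<Sum>k<p. l (fst (Orb k)) (snd (Orb k)))"

definition lstar :: "('x \<Rightarrow> 'u \<Rightarrow> 'x) \<Rightarrow> 'x set \<Rightarrow> 'u set \<Rightarrow> ('x \<Rightarrow> 'u \<Rightarrow> real) \<Rightarrow> real" where
  "lstar f X U l = Inf {orbit_avg l p Orb | p Orb. feasible_orbit f X U p Orb}"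

definition orbit_dist :: "nat \<Rightarrow> (nat \<Rightarrow> 'x::real_normed_vector \<times> 'u::real_normed_vector) \<Rightarrow> 'x \<times> 'u \<Rightarrow> real" where
  "orbit_dist p Orb z = Min ((\<lambda>k. norm (z - Orb k)) ` {..<p})"

definition orbit_state_dist :: "nat \<Rightarrow> (nat \<Rightarrow> 'x::real_normed_vector \<times> 'u) \<Rightarrow> 'x \<Rightarrow> real" where
  "orbit_state_dist p Orb x = Min ((\<lambda>k. norm (x - fst (Orb k))) ` {..<p})"

definition class_Kinf :: "(real \<Rightarrow> real) \<Rightarrow> bool" where
  "class_Kinf a \<longleftrightarrow> continuous_on {0..} a \<and> a 0 = 0 \<and> strict_mono_on {0..} a
     \<and> filterlim a at_top at_top"

definition class_L :: "(real \<Rightarrow> real) \<Rightarrow> bool" where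
  "class_L d \<longleftrightarrow> continuous_on {0..} d \<and> (\<forall>t\<ge>0. d t \<ge> 0)
     \<and> (\<forall>s t. 0 \<le> s \<longrightarrow> s \<le> t \<longrightarrow> d t \<le> d s) \<and> (d \<longlongrightarrow> 0) at_top"

definition ltilde :: "('x \<Rightarrow> 'u \<Rightarrow> 'x) \<Rightarrow> ('x \<Rightarrow> 'u \<Rightarrow> real) \<Rightarrow> real \<Rightarrow> ('x \<Rightarrow> real) \<Rightarrow> 'x \<Rightarrow> 'u \<Rightarrow> real" where
  "ltilde f l ls lam x u = l x u - ls + lam x - lam (f x u)"

definition Vbeta :: "('x \<Rightarrow> 'u \<Rightarrow> 'x) \<Rightarrow> 'x set \<Rightarrow> 'u set \<Rightarrow> ('x \<Rightarrow> 'u \<Rightarrow> real) \<Rightarrow> nat \<Rightarrow> 'x \<Rightarrow> real" where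
  "Vbeta f X U g N x = Inf ((\<lambda>u. \<Sum>k<N. (real (N - k) / real N) * g (traj f u x k) (u k)) ` adm f X U N x)"

text \<open>X_pi(C,N0); membership requires V_N^\<beta>(x) < \<infinity>, i.e. U^N(x) nonempty.\<close>
definition Xpi :: "('x \<Rightarrow> 'u \<Rightarrow> 'x) \<Rightarrow> 'x set \<Rightarrow> 'u set \<Rightarrow> ('x \<Rightarrow> 'u \<Rightarrow> real) \<Rightarrow> ('x \<Rightarrow> real) \<Rightarrow> real \<Rightarrow> real \<Rightarrow> nat \<Rightarrow> 'x set" where
  "Xpi f X U l lam lbar C N0 = {x \<in> X. \<forall>N\<ge>N0. adm f X U N x \<noteq> {} \<and>
     Vbeta f X U l N x - (real N + 1) / 2 * lstar f X U l + lam x + lbar \<le> C}"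

end

theory Submission
  imports Defs
begin


lemma L_exists:
  fixes P :: "nat \<Rightarrow> real \<Rightarrow> bool" and Bd :: real
  assumes Bd0: "Bd \<ge> 0" and PB: "\<And>N v. P N v \<Longrightarrow> v \<le> Bd"
    and Plim: "\<And>\<tau>. \<tau> > 0 \<Longrightarrow> \<exists>N1. \<forall>N\<ge>N1. \<forall>v. P N v \<longrightarrow> v \<le> \<tau>"
  shows "\<exists>\<delta>. class_L \<delta> \<and> (\<forall>N v. P N v \<longrightarrow> v \<le> \<delta> (real N))"
proof -
  define F where "F = {(a::real, c::real). a \<ge> 0 \<and> c \<ge> 0 \<and> (\<forall>N v. P N v \<longrightarrow> v \<le> a + c / (real N + 1))}"
  define S where "S t = (\<lambda>(a, c). a + c / (t + 1)) ` F" for t :: real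
  define \<delta> where "\<delta> t = Inf (S t)" for t
  have BdF: "(Bd, 0) \<in> F" using PB Bd0 unfolding F_def by auto
  have Sne: "S t \<noteq> {}" for t using BdF unfolding S_def by auto
  have Sge: "s \<ge> 0" if "s \<in> S t" "t \<ge> 0" for s t
    using that unfolding S_def F_def by auto
  have bdd: "bdd_below (S t)" if "t \<ge> 0" for t
    unfolding bdd_below_def using Sge[OF _ that] by auto
  have dle: "\<delta> t \<le> a + c / (t + 1)" if "(a, c) \<in> F" "t \<ge> 0" for a c t
    unfolding \<delta>_def by (rule cInf_lower) (use that bdd in \<open>auto simp: S_def\<close>)
  have dge: "\<delta> t \<ge> z" if "\<And>a c. (a, c) \<in> F \<Longrightarrow> z \<le> a + c / (t + 1)" for z t
    unfolding \<delta>_def by (rule cInf_greatest) (use Sne that in \<open>auto simp: S_def\<close>)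
  have d0: "\<delta> t \<ge> 0" if "t \<ge> 0" for t
    by (rule dge) (use that in \<open>auto simp: F_def\<close>)
  have dP: "v \<le> \<delta> (real N)" if "P N v" for N v
    by (rule dge) (use that in \<open>auto simp: F_def\<close>)
  have mono: "\<delta> t \<le> \<delta> s" if "0 \<le> s" "s \<le> t" for s t
  proof -
    have "\<delta> t \<le> a + c / (s + 1)" if "(a, c) \<in> F" for a c
    proof -
      have "c \<ge> 0" using that by (auto simp: F_def)
      hence "c / (t + 1) \<le> c / (s + 1)" using \<open>0 \<le> s\<close> \<open>s \<le> t\<close>
        by (intro divide_left_mono) auto
      thus ?thesis using dle[OF that, of t] \<open>0 \<le> s\<close> \<open>s \<le> t\<close> by linarith
    qed
    thus ?thesis unfolding \<delta>_def[of s] by (intro cInf_greatest) (use Sne in \<open>auto simp: S_def\<close>)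
  qed
  have lip: "\<delta> s \<le> \<delta> t + \<delta> 0 * (t - s)" if "0 \<le> s" "s \<le> t" for s t
  proof -
    have "\<delta> s * ((s + 1) / (t + 1)) \<le> \<delta> t"
    proof (rule dge)
      fix a c assume ac: "(a, c) \<in> F"
      have a0: "a \<ge> 0" using ac by (auto simp: F_def)
      have "\<delta> s \<le> a + c / (s + 1)" using dle[OF ac that(1)] .
      hence "\<delta> s * ((s + 1) / (t + 1)) \<le> (a + c / (s + 1)) * ((s + 1) / (t + 1))"
        using that by (intro mult_right_mono) auto
      also have "\<dots> = a * ((s + 1) / (t + 1)) + c / (t + 1)"
      proof -
        have "s + 1 > 0" "t + 1 > 0" using that by auto
        hence "c / (s + 1) * ((s + 1) / (t + 1)) = c / (t + 1)" by simp
        thus ?thesis by (simp only: distrib_right)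
      qed
      also have "a * ((s + 1) / (t + 1)) \<le> a" using a0 that by (simp add: field_simps mult_left_mono)
      finally show "\<delta> s * ((s + 1) / (t + 1)) \<le> a + c / (t + 1)" by linarith
    qed
    moreover have "\<delta> s - \<delta> s * ((s + 1) / (t + 1)) = \<delta> s * ((t - s) / (t + 1))"
      using that by (simp add: field_simps)
    moreover have "\<delta> s * ((t - s) / (t + 1)) \<le> \<delta> 0 * (t - s)"
    proof -
      have "\<delta> s * ((t - s) / (t + 1)) \<le> \<delta> s * (t - s)"
        using that d0[of s] by (intro mult_left_mono) (auto simp: field_simps mult_right_mono)
      also have "\<dots> \<le> \<delta> 0 * (t - s)" using mono[of 0 s] that by (intro mult_right_mono) auto
      finally show ?thesis .
    qed
    ultimately show ?thesis by linarith
  qed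
  have lip2: "\<bar>\<delta> s - \<delta> t\<bar> \<le> \<delta> 0 * \<bar>s - t\<bar>" if "0 \<le> s" "0 \<le> t" for s t
  proof (cases "s \<le> t")
    case True thus ?thesis using lip[of s t] mono[of s t] that d0[of 0] by auto
  next
    case False thus ?thesis using lip[of t s] mono[of t s] that d0[of 0] by auto
  qed
  have cont: "continuous_on {0..} \<delta>"
    unfolding continuous_on_iff
  proof (intro ballI allI impI)
    fix x e :: real assume x: "x \<in> {0..}" and e: "e > 0"
    show "\<exists>d>0. \<forall>x'\<in>{0..}. dist x' x < d \<longrightarrow> dist (\<delta> x') (\<delta> x) < e"
    proof (intro exI[of _ "e / (\<delta> 0 + 1)"] conjI ballI impI)
      show "e / (\<delta> 0 + 1) > 0" using e d0[of 0] by auto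
      fix x' :: real assume x': "x' \<in> {0..}" and dx: "dist x' x < e / (\<delta> 0 + 1)"
      have "\<bar>\<delta> x' - \<delta> x\<bar> \<le> \<delta> 0 * \<bar>x' - x\<bar>" using lip2 x x' by auto
      also have "\<dots> \<le> (\<delta> 0 + 1) * \<bar>x' - x\<bar>" by (simp add: mult_right_mono)
      also have "\<dots> < e" using dx d0[of 0] by (simp add: dist_real_def field_simps)
      finally show "dist (\<delta> x') (\<delta> x) < e" by (simp add: dist_real_def)
    qed
  qed
  have lim: "(\<delta> \<longlongrightarrow> 0) at_top"
  proof (rule order_tendstoI)
    fix a :: real assume "a < 0" thus "eventually (\<lambda>t. a < \<delta> t) at_top"
      using d0 unfolding eventually_at_top_linorder by (intro exI[of _ 0]) (auto intro: less_le_trans)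
  next
    fix \<tau> :: real assume \<tau>: "0 < \<tau>"
    obtain N1 where N1: "\<forall>N\<ge>N1. \<forall>v. P N v \<longrightarrow> v \<le> \<tau> / 2" using Plim[of "\<tau>/2"] \<tau> by auto
    define c where "c = real (N1 + 1) * Bd"
    have cF: "(\<tau> / 2, c) \<in> F"
      unfolding F_def
    proof (safe)
      show "0 \<le> \<tau> / 2" using \<tau> by simp
      show "0 \<le> c" using Bd0 by (simp add: c_def)
      fix N v assume Pv: "P N v"
      show "v \<le> \<tau> / 2 + c / (real N + 1)"
      proof (cases "N \<ge> N1")
        case True thus ?thesis using N1 Pv Bd0 by (auto intro: add_increasing2 simp: c_def)
      next
        case False
        hence "Bd \<le> c / (real N + 1)" using Bd0 by (simp add: c_def field_simps mult_left_mono)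
        thus ?thesis using PB[OF Pv] \<tau> by linarith
      qed
    qed
    show "eventually (\<lambda>t. \<delta> t < \<tau>) at_top"
      unfolding eventually_at_top_linorder
    proof (intro exI[of _ "2 * c / \<tau> + 1"] allI impI)
      fix t assume t: "t \<ge> 2 * c / \<tau> + 1"
      have c0: "c \<ge> 0" using Bd0 by (simp add: c_def)
      have t0: "t \<ge> 0" using t c0 \<tau> by (smt (verit) divide_nonneg_pos)
      have "c / (t + 1) < \<tau> / 2"
      proof -
        have "c * 2 < \<tau> * (t + 1)" using t \<tau> c0 by (simp add: field_simps)
        thus ?thesis using t0 by (simp add: field_simps)
      qed
      thus "\<delta> t < \<tau>" using dle[OF cF t0] by linarith
    qed
  qed
  show ?thesis
    by (intro exI[of _ \<delta>] conjI) (use cont d0 mono lim dP in \<open>auto simp: class_L_def\<close>)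
qed



lemma sum_if_bound:
  fixes w K :: real
  assumes "w \<ge> 0" "K \<ge> 0" "\<And>k. k < N \<Longrightarrow> e k \<le> (if Q k then w else K)"
  shows "(\<Sum>k<N. e k) \<le> real N * w + K * real (card {k. k < N \<and> \<not> Q k})"
proof -
  have "(\<Sum>k<N. e k) \<le> (\<Sum>k<N. w + (if Q k then 0 else K))"
  proof (rule sum_mono)
    fix k assume "k \<in> {..<N}"
    thus "e k \<le> w + (if Q k then 0 else K)" using assms(3)[of k] assms(1,2) by (auto split: if_splits)
  qed
  also have "\<dots> = real N * w + (\<Sum>k<N. (if Q k then 0 else K))" by (simp add: sum.distrib)
  also have "(\<Sum>k<N. (if Q k then 0 else K)) = (\<Sum>k\<in>{k. k < N \<and> \<not> Q k}. K)"
  proof -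
    have "(\<Sum>k<N. (if Q k then 0 else K)) = (\<Sum>k<N. (if \<not> Q k then K else 0))" by (intro sum.cong) auto
    also have "\<dots> = (\<Sum>k\<in>{k\<in>{..<N}. \<not> Q k}. K)" by (subst sum.inter_filter) auto
    also have "{k\<in>{..<N}. \<not> Q k} = {k. k < N \<and> \<not> Q k}" by auto
    finally show ?thesis .
  qed
  also have "\<dots> = K * real (card {k. k < N \<and> \<not> Q k})" by simp
  finally show ?thesis .
qed

lemma card_pairs:
  assumes "\<And>k. g k \<Longrightarrow> k < N"
  shows "card {k. k < N \<and> \<not> (g k \<and> g (Suc k))} \<le> 2 * card {k. k < N \<and> \<not> g k} + 1"
proof -
  have "{k. k < N \<and> \<not> (g k \<and> g (Suc k))} \<subseteq> {k. k < N \<and> \<not> g k} \<union> {k. k < N \<and> \<not> g (Suc k)}" by auto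
  hence "card {k. k < N \<and> \<not> (g k \<and> g (Suc k))} \<le> card ({k. k < N \<and> \<not> g k} \<union> {k. k < N \<and> \<not> g (Suc k)})"
    by (intro card_mono) auto
  also have "\<dots> \<le> card {k. k < N \<and> \<not> g k} + card {k. k < N \<and> \<not> g (Suc k)}" by (rule card_Un_le)
  also have "card {k. k < N \<and> \<not> g (Suc k)} \<le> card {k. k < N \<and> \<not> g k} + 1"
  proof -
    have "card {k. k < N \<and> \<not> g (Suc k)} = card (Suc ` {k. k < N \<and> \<not> g (Suc k)})"
      by (simp add: card_image)
    also have "Suc ` {k. k < N \<and> \<not> g (Suc k)} \<subseteq> insert N {k. k < N \<and> \<not> g k}"
      using assms by auto
    hence "card (Suc ` {k. k < N \<and> \<not> g (Suc k)}) \<le> card (insert N {k. k < N \<and> \<not> g k})"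
      by (intro card_mono) auto
    also have "\<dots> \<le> card {k. k < N \<and> \<not> g k} + 1" by (simp add: card_insert_if)
    finally show ?thesis .
  qed
  finally show ?thesis by linarith
qed

lemma tele_bound:
  fixes ls L :: "nat \<Rightarrow> real" and g :: "nat \<Rightarrow> bool" and j :: "nat \<Rightarrow> nat"
  assumes p0: "p > 0"
    and gN: "\<And>k. g k \<Longrightarrow> k < N"
    and jp: "\<And>k. g k \<Longrightarrow> j k < p"
    and jsucc: "\<And>k. g k \<Longrightarrow> g (Suc k) \<Longrightarrow> j (Suc k) = Suc (j k) mod p"
    and close: "\<And>k. g k \<Longrightarrow> \<bar>ls k - L (j k)\<bar> \<le> w"
    and w0: "w \<ge> 0"
    and lsb: "\<And>k. k < N \<Longrightarrow> \<bar>ls k\<bar> \<le> lb" and Lb: "\<And>i. i < p \<Longrightarrow> \<bar>L i\<bar> \<le> lb"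
  shows "\<bar>(\<Sum>k<N. ls k) - real N * (\<Sum>i<p. L i) / real p\<bar>
     \<le> (\<Sum>i<p. \<bar>L i - (\<Sum>i<p. L i) / real p\<bar>) + real N * w
       + (2 * lb + 2 * (\<Sum>i<p. \<bar>L i - (\<Sum>i<p. L i) / real p\<bar>)) * (2 * real (card {k. k < N \<and> \<not> g k}) + 1)"
proof -
  define S where "S = (\<Sum>i<p. L i)"
  define c where "c i = L i - S / real p" for i
  define Phi where "Phi = (\<Sum>i<p. \<bar>c i\<bar>)"
  define K where "K = 2 * lb + 2 * Phi"
  define \<phi> where "\<phi> j = - (\<Sum>i<j. c i)" for j
  have csum: "(\<Sum>i<p. c i) = 0" using p0 by (simp add: c_def S_def sum_subtractf)
  have phistep: "\<phi> i - \<phi> (Suc i mod p) = c i" if "i < p" for i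
  proof (cases "Suc i < p")
    case True thus ?thesis by (simp add: \<phi>_def)
  next
    case False
    hence "Suc i = p" using that by auto
    have "(\<Sum>k<Suc i. c k) = 0" using csum \<open>Suc i = p\<close> by simp
    hence "\<phi> i = c i" by (simp add: \<phi>_def)
    thus ?thesis using \<open>Suc i = p\<close> by (simp add: \<phi>_def)
  qed
  have phib: "\<bar>\<phi> i\<bar> \<le> Phi" if "i \<le> p" for i
  proof -
    have "\<bar>\<phi> i\<bar> \<le> (\<Sum>i<i. \<bar>c i\<bar>)" unfolding \<phi>_def by (simp add: sum_abs)
    also have "\<dots> \<le> Phi" unfolding Phi_def using that by (intro sum_mono2) auto
    finally show ?thesis .
  qed
  have Phi0: "Phi \<ge> 0" unfolding Phi_def by (simp add: sum_nonneg)
  have Sb: "\<bar>S / real p\<bar> \<le> lb"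
  proof -
    have "\<bar>S\<bar> \<le> (\<Sum>i<p. \<bar>L i\<bar>)" unfolding S_def by (rule sum_abs)
    also have "\<dots> \<le> (\<Sum>i<p. lb)" using Lb by (intro sum_mono) auto
    finally show ?thesis using p0 by (simp add: field_simps)
  qed
  have lb0: "lb \<ge> 0" using Lb[of 0] p0 by auto
  define \<psi> where "\<psi> k = (if g k then \<phi> (j k) else 0)" for k
  have psib: "\<bar>\<psi> k\<bar> \<le> Phi" for k using phib jp Phi0 unfolding \<psi>_def by (auto simp: less_imp_le)
  have psiN: "\<psi> N = 0" using gN unfolding \<psi>_def by auto
  define e where "e k = ls k - S / real p - (\<psi> k - \<psi> (Suc k))" for k
  have eb: "\<bar>e k\<bar> \<le> (if g k \<and> g (Suc k) then w else K)" if "k < N" for k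
  proof (cases "g k \<and> g (Suc k)")
    case True
    hence "\<psi> k - \<psi> (Suc k) = c (j k)" using phistep[OF jp] jsucc by (simp add: \<psi>_def)
    hence "e k = ls k - L (j k)" by (simp add: e_def c_def)
    thus ?thesis using True close by simp
  next
    case False
    have "\<bar>e k\<bar> \<le> \<bar>ls k\<bar> + \<bar>S / real p\<bar> + \<bar>\<psi> k\<bar> + \<bar>\<psi> (Suc k)\<bar>" unfolding e_def by linarith
    also have "\<dots> \<le> K" using lsb[OF that] Sb psib[of k] psib[of "Suc k"] by (simp add: K_def)
    moreover have "(if g k \<and> g (Suc k) then w else K) = K" by (rule if_not_P[OF False])
    ultimately show ?thesis by simp
  qed
  have K0: "K \<ge> 0" using lb0 Phi0 by (simp add: K_def)
  have "(\<Sum>k<N. ls k) - real N * S / real p = (\<Sum>k<N. ls k - S / real p)" by (simp add: sum_subtractf)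
  also have "\<dots> = (\<Sum>k<N. \<psi> k - \<psi> (Suc k)) + (\<Sum>k<N. e k)" by (simp add: e_def sum.distrib[symmetric])
  also have "(\<Sum>k<N. \<psi> k - \<psi> (Suc k)) = \<psi> 0" using psiN by (simp add: sum_lessThan_telescope')
  finally have eq: "(\<Sum>k<N. ls k) - real N * S / real p = \<psi> 0 + (\<Sum>k<N. e k)" .
  have "\<bar>\<Sum>k<N. e k\<bar> \<le> (\<Sum>k<N. \<bar>e k\<bar>)" by (rule sum_abs)
  also have "\<dots> \<le> real N * w + K * real (card {k. k < N \<and> \<not> (g k \<and> g (Suc k))})"
    by (rule sum_if_bound[OF w0 K0 eb])
  also have "K * real (card {k. k < N \<and> \<not> (g k \<and> g (Suc k))}) \<le> K * (2 * real (card {k. k < N \<and> \<not> g k}) + 1)"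
  proof -
    have "real (card {k. k < N \<and> \<not> (g k \<and> g (Suc k))}) \<le> 2 * real (card {k. k < N \<and> \<not> g k}) + 1"
      using card_pairs[of g N, OF gN] by linarith
    thus ?thesis using K0 by (rule mult_left_mono)
  qed
  finally have "\<bar>\<Sum>k<N. e k\<bar> \<le> real N * w + K * (2 * real (card {k. k < N \<and> \<not> g k}) + 1)" by linarith
  hence "\<bar>(\<Sum>k<N. ls k) - real N * S / real p\<bar> \<le> Phi + real N * w + K * (2 * real (card {k. k < N \<and> \<not> g k}) + 1)"
    using eq psib[of 0] by linarith
  thus ?thesis by (simp add: S_def Phi_def K_def c_def)
qed

lemma bad_count:
  fixes a :: "nat \<Rightarrow> real" and N m :: nat
  assumes N0: "N > 0" and m0: "m > 0" and a0: "\<And>k. k < N \<Longrightarrow> a k \<ge> 0"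
    and sumD: "(\<Sum>k<N. real (N - k) / real N * a k) \<le> D" and ae0: "ae > 0"
    and bad: "\<And>k. k < N \<Longrightarrow> bad k \<Longrightarrow> a k \<ge> ae"
  shows "real (card {k. k < N \<and> bad k}) \<le> real m + D * real N / (real m * ae)"
proof -
  have D0: "D \<ge> 0" using sumD a0 by (smt (verit) sum_nonneg divide_nonneg_nonneg mult_nonneg_nonneg of_nat_0_le_iff lessThan_iff)
  have extra0: "D * real N / (real m * ae) \<ge> 0" using D0 ae0 by simp
  show ?thesis
  proof (cases "m \<ge> N")
    case True
    have "card {k. k < N \<and> bad k} \<le> card {..<N}" by (intro card_mono) auto
    thus ?thesis using True extra0 by simp
  next
    case False
    define S1 where "S1 = {k. k < N - m \<and> bad k}"
    have sub: "{k. k < N \<and> bad k} \<subseteq> S1 \<union> {N - m..<N}" unfolding S1_def by auto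
    have "card {k. k < N \<and> bad k} \<le> card (S1 \<union> {N - m..<N})" by (intro card_mono[OF _ sub]) (auto simp: S1_def)
    also have "\<dots> \<le> card S1 + card {N - m..<N}" by (rule card_Un_le)
    also have "card {N - m..<N} = m" using False by simp
    finally have c1: "real (card {k. k < N \<and> bad k}) \<le> real (card S1) + real m" by linarith
    have "real (card S1) * (real m / real N * ae) = (\<Sum>k\<in>S1. real m / real N * ae)" by simp
    also have "\<dots> \<le> (\<Sum>k\<in>S1. real (N - k) / real N * a k)"
    proof (rule sum_mono)
      fix k assume k: "k \<in> S1"
      hence "real m \<le> real (N - k)" by (auto simp: S1_def)
      hence "real m / real N \<le> real (N - k) / real N" using N0 by (intro divide_right_mono) auto
      moreover have "ae \<le> a k" using bad[of k] k by (auto simp: S1_def)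
      ultimately show "real m / real N * ae \<le> real (N - k) / real N * a k"
        using ae0 by (intro mult_mono) auto
    qed
    also have "\<dots> \<le> (\<Sum>k<N. real (N - k) / real N * a k)"
      using a0 by (intro sum_mono2) (auto simp: S1_def)
    also have "\<dots> \<le> D" by (rule sumD)
    finally have "real (card S1) * (real m / real N * ae) \<le> D" .
    hence "real (card S1) \<le> D * real N / (real m * ae)" using N0 m0 ae0 by (simp add: field_simps)
    thus ?thesis using c1 by linarith
  qed
qed

lemma weighted_telescope:
  fixes h :: "nat \<Rightarrow> real"
  shows "(\<Sum>k<n. (M - real k) * (h k - h (Suc k))) = M * h 0 - (M - real n) * h n - (\<Sum>k<n. h (Suc k))"
  by (induction n) (simp_all add: algebra_simps)

lemma weight_sum:
  shows "(\<Sum>k<n. (M - real k)) = real n * M - real n * (real n - 1) / 2"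
  by (induction n) (simp_all add: field_simps)

lemma weight_sum_N:
  assumes "N > 0"
  shows "(\<Sum>k<N. real (N - k) / real N) = (real N + 1) / 2"
proof -
  have "(\<Sum>k<N. real (N - k) / real N) = (\<Sum>k<N. (real N - real k)) / real N"
    by (simp add: sum_divide_distrib of_nat_diff)
  also have "(\<Sum>k<N. (real N - real k)) = real N * real N - real N * (real N - 1) / 2" by (rule weight_sum)
  also have "(real N * real N - real N * (real N - 1) / 2) / real N = (real N + 1) / 2" using assms by (simp add: field_simps)
  finally show ?thesis .
qed

lemma weighted_telescope_N:
  fixes h :: "nat \<Rightarrow> real"
  assumes "N > 0"
  shows "(\<Sum>k<N. real (N - k) / real N * (h k - h (Suc k))) = h 0 - (1 / real N) * (\<Sum>k<N. h (Suc k))"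
proof -
  have "(\<Sum>k<N. real (N - k) / real N * (h k - h (Suc k))) = (\<Sum>k<N. (real N - real k) * (h k - h (Suc k))) / real N"
    by (simp add: sum_divide_distrib of_nat_diff)
  also have "(\<Sum>k<N. (real N - real k) * (h k - h (Suc k))) = real N * h 0 - (\<Sum>k<N. h (Suc k))"
    using weighted_telescope[of "real N" h N] by simp
  also have "(real N * h 0 - (\<Sum>k<N. h (Suc k))) / real N = h 0 - (1 / real N) * (\<Sum>k<N. h (Suc k))"
    using assms by (simp add: diff_divide_distrib)
  finally show ?thesis .
qed



lemma norm_fst_diff: "norm (fst z - fst w) \<le> norm (z - w)"
  by (metis fst_diff norm_fst_le prod.collapse)

lemma tracking:
  fixes f :: "'x::real_normed_vector \<Rightarrow> 'u::real_normed_vector \<Rightarrow> 'x"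
  assumes cont: "continuous_on (X \<times> U) (\<lambda>(x, u). f x u)" and cX: "compact X" and cU: "compact U"
    and feas: "feasible_orbit f X U p Ps" and mini: "minimal_orbit p Ps"
  shows "\<exists>e0>0. \<forall>x u x' j j'. (x, u) \<in> X \<times> U \<longrightarrow> x' = f x u \<longrightarrow> j < p \<longrightarrow> j' < p \<longrightarrow>
            norm ((x, u) - Ps j) \<le> e0 \<longrightarrow> norm (x' - fst (Ps j')) \<le> e0 \<longrightarrow> j' = Suc j mod p"
proof -
  have p0: "p > 0" and PsXU: "\<And>k. k < p \<Longrightarrow> Ps k \<in> X \<times> U"
    and Psf: "\<And>k. k < p \<Longrightarrow> fst (Ps (Suc k mod p)) = f (fst (Ps k)) (snd (Ps k))"
    using feas by (auto simp: feasible_orbit_def)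
  have uc: "uniformly_continuous_on (X \<times> U) (\<lambda>(x, u). f x u)"
    by (rule compact_uniformly_continuous[OF cont compact_Times[OF cX cU]])
  define Dset where "Dset = {norm (fst (Ps i) - fst (Ps j)) | i j. i < p \<and> j < p \<and> i \<noteq> j}"
  have finD: "finite Dset"
  proof -
    have "Dset \<subseteq> (\<lambda>(i, j). norm (fst (Ps i) - fst (Ps j))) ` ({..<p} \<times> {..<p})"
      unfolding Dset_def by auto
    thus ?thesis by (rule finite_subset) auto
  qed
  define sep where "sep = Min (insert 1 Dset)"
  have sep0: "sep > 0"
  proof -
    have "\<forall>x\<in>insert 1 Dset. 0 < x"
    proof
      fix x assume "x \<in> insert 1 Dset"
      then consider "x = 1" | i j where "i < p" "j < p" "i \<noteq> j" "x = norm (fst (Ps i) - fst (Ps j))"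
        unfolding Dset_def by auto
      thus "0 < x"
      proof cases
        case 2
        hence "fst (Ps i) \<noteq> fst (Ps j)" using mini unfolding minimal_orbit_def by blast
        thus ?thesis using 2 by simp
      qed simp
    qed
    thus ?thesis unfolding sep_def using finD by simp
  qed
  have sepD: "sep \<le> norm (fst (Ps i) - fst (Ps j))" if "i < p" "j < p" "i \<noteq> j" for i j
    unfolding sep_def using finD that by (intro Min_le) (auto simp: Dset_def)
  obtain d where d0: "d > 0" and dD: "\<And>z z'. z \<in> X \<times> U \<Longrightarrow> z' \<in> X \<times> U \<Longrightarrow> dist z' z < d \<Longrightarrow>
      dist ((\<lambda>(x, u). f x u) z') ((\<lambda>(x, u). f x u) z) < sep / 2"
    using uc sep0 unfolding uniformly_continuous_on_def by (metis half_gt_zero)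
  define e0 where "e0 = min (d / 2) (sep / 4)"
  show ?thesis
  proof (intro exI[of _ e0] conjI allI impI)
    show "e0 > 0" using d0 sep0 by (simp add: e0_def)
    fix x u x' j j'
    assume xu: "(x, u) \<in> X \<times> U" and x': "x' = f x u" and j: "j < p" and j': "j' < p"
      and n1: "norm ((x, u) - Ps j) \<le> e0" and n2: "norm (x' - fst (Ps j')) \<le> e0"
    have "dist (x, u) (Ps j) < d" using n1 d0 by (simp add: dist_norm e0_def)
    hence "dist ((\<lambda>(x, u). f x u) (x, u)) ((\<lambda>(x, u). f x u) (Ps j)) < sep / 2"
      using dD[OF PsXU[OF j] xu] by simp
    hence "norm (x' - fst (Ps (Suc j mod p))) < sep / 2"
      using Psf[OF j] x' by (simp add: dist_norm case_prod_beta)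
    moreover have "norm (fst (Ps j') - fst (Ps (Suc j mod p))) \<le> norm (x' - fst (Ps j')) + norm (x' - fst (Ps (Suc j mod p)))"
    proof -
      have "fst (Ps j') - fst (Ps (Suc j mod p)) = (x' - fst (Ps (Suc j mod p))) - (x' - fst (Ps j'))" by simp
      thus ?thesis using norm_triangle_ineq4[of "x' - fst (Ps (Suc j mod p))" "x' - fst (Ps j')"] by simp
    qed
    moreover have "norm (x' - fst (Ps j')) \<le> sep / 4" using n2 unfolding e0_def by simp
    ultimately have "norm (fst (Ps j') - fst (Ps (Suc j mod p))) < sep" using sep0 by linarith
    thus "j' = Suc j mod p" using sepD[OF j'] p0 by (metis mod_less_divisor not_le)
  qed
qed



lemma Kinf_mono: "class_Kinf a \<Longrightarrow> 0 \<le> s \<Longrightarrow> s \<le> t \<Longrightarrow> a s \<le> a t"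
  unfolding class_Kinf_def by (metis atLeast_iff order.trans less_eq_real_def strict_mono_onD)

lemma Kinf_nonneg: "class_Kinf a \<Longrightarrow> 0 \<le> s \<Longrightarrow> a s \<ge> 0"
  using Kinf_mono[of a 0 s] unfolding class_Kinf_def by auto

lemma Kinf_pos: "class_Kinf a \<Longrightarrow> 0 < s \<Longrightarrow> a s > 0"
  unfolding class_Kinf_def by (metis atLeast_iff less_eq_real_def strict_mono_onD)

lemma orbit_dist_le_iff:
  assumes "p > 0"
  shows "orbit_dist p Ps z \<le> e \<longleftrightarrow> (\<exists>j<p. norm (z - Ps j) \<le> e)"
  using assms unfolding orbit_dist_def by (subst Min_le_iff) auto

lemma orbit_dist_nonneg:
  assumes "p > 0"
  shows "orbit_dist p Ps z \<ge> 0"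
  using assms unfolding orbit_dist_def by (subst Min_ge_iff) auto

lemma avg_estimate:
  fixes f :: "'x::real_normed_vector \<Rightarrow> 'u::real_normed_vector \<Rightarrow> 'x"
    and l :: "'x \<Rightarrow> 'u \<Rightarrow> real" and lam :: "'x \<Rightarrow> real"
  assumes cont: "continuous_on (X \<times> U) (\<lambda>(x, u). f x u)" and cX: "compact X" and cU: "compact U"
    and feas: "feasible_orbit f X U p Ps" and mini: "minimal_orbit p Ps"
    and lamb: "\<forall>x\<in>X. \<bar>lam x\<bar> \<le> lbar"
    and a3K: "class_Kinf a3"
    and a3: "\<forall>x\<in>X. \<forall>u\<in>U. f x u \<in> X \<longrightarrow> ltilde f l ls lam x u \<ge> a3 (orbit_dist p Ps (x, u))"
    and omK: "class_Kinf om"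
    and om: "\<forall>x\<in>X. \<forall>k<p. \<bar>lam x - lam (fst (Ps k))\<bar> \<le> om (norm (x - fst (Ps k)))"
    and D0: "D \<ge> 0" and tau: "\<tau> > 0"
  shows "\<exists>N1>0. \<forall>N\<ge>N1. \<forall>z\<in>X. \<forall>u\<in>adm f X U N z.
     (\<Sum>k<N. real (N - k) / real N * ltilde f l ls lam (traj f u z k) (u k)) \<le> D \<longrightarrow>
     \<bar>(1 / real N) * (\<Sum>k<N. lam (traj f u z (Suc k))) - (\<Sum>i<p. lam (fst (Ps i))) / real p\<bar> \<le> \<tau>"
proof -
  have p0: "p > 0" and PsXU: "\<And>k. k < p \<Longrightarrow> Ps k \<in> X \<times> U"
    using feas by (auto simp: feasible_orbit_def)
  obtain e0 where e0: "e0 > 0" and e0P: "\<And>x u x' j j'. (x, u) \<in> X \<times> U \<Longrightarrow> x' = f x u \<Longrightarrow> j < p \<Longrightarrow> j' < p \<Longrightarrow>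
            norm ((x, u) - Ps j) \<le> e0 \<Longrightarrow> norm (x' - fst (Ps j')) \<le> e0 \<Longrightarrow> j' = Suc j mod p"
    using tracking[OF cont cX cU feas mini] by blast
  have omc: "continuous_on {0..} om" and om00: "om 0 = 0" using omK by (auto simp: class_Kinf_def)
  obtain d where d0: "d > 0" and dD: "\<And>x'. x' \<in> {0..} \<Longrightarrow> dist x' 0 < d \<Longrightarrow> dist (om x') (om 0) < \<tau> / 3"
    using omc tau unfolding continuous_on_iff by (metis atLeast_iff divide_pos_pos order_refl zero_less_numeral)
  define \<epsilon> where "\<epsilon> = min e0 (d / 2)"
  have eps0: "\<epsilon> > 0" using e0 d0 by (simp add: \<epsilon>_def)
  have "\<epsilon> < d" using d0 by (simp add: \<epsilon>_def)
  hence ome: "om \<epsilon> < \<tau> / 3" using dD[of \<epsilon>] eps0 om00 by (simp add: dist_real_def)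
  have ome0: "om \<epsilon> \<ge> 0" using Kinf_nonneg[OF omK] eps0 by simp
  define ae where "ae = a3 \<epsilon>"
  have ae0: "ae > 0" using Kinf_pos[OF a3K eps0] by (simp add: ae_def)
  define L where "L i = lam (fst (Ps i))" for i
  define S where "S = (\<Sum>i<p. L i)"
  define Phi where "Phi = (\<Sum>i<p. \<bar>L i - S / real p\<bar>)"
  define K where "K = 2 * lbar + 2 * Phi"
  have lb0: "lbar \<ge> 0" using lamb PsXU[OF p0] by force
  have Phi0: "Phi \<ge> 0" unfolding Phi_def by (simp add: sum_nonneg)
  have K0: "K \<ge> 0" using lb0 Phi0 by (simp add: K_def)
  obtain n where n: "6 * K * D / (\<tau> * ae) < real n" using reals_Archimedean2 by blast
  define m where "m = Suc n"
  have m0: "m > 0" by (simp add: m_def)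
  have mbound: "2 * K * D / (real m * ae) \<le> \<tau> / 3"
  proof -
    have "6 * K * D / (\<tau> * ae) < real m" using n by (simp add: m_def)
    hence "6 * K * D < real m * (\<tau> * ae)" using tau ae0 by (simp add: field_simps)
    hence "2 * K * D * 3 \<le> \<tau> * (real m * ae)" by (simp add: algebra_simps)
    thus ?thesis using tau ae0 m0 by (simp add: field_simps)
  qed
  define R where "R = Phi + K + 2 * lbar + 2 * K * real m"
  have R0: "R \<ge> 0" using Phi0 K0 lb0 by (simp add: R_def)
  obtain n' where n': "3 * R / \<tau> < real n'" using reals_Archimedean2 by blast
  define N1 where "N1 = Suc n'"
  have N1R: "R / real N1 < \<tau> / 3"
  proof -
    have "3 * R / \<tau> < real N1" using n' by (simp add: N1_def)
    hence "3 * R < \<tau> * real N1" using tau by (simp add: field_simps)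
    thus ?thesis by (simp add: N1_def field_simps)
  qed
  show ?thesis
  proof (intro exI[of _ N1] conjI allI impI ballI)
    show "N1 > 0" by (simp add: N1_def)
    fix N z u
    assume N: "N1 \<le> N" and z: "z \<in> X" and u: "u \<in> adm f X U N z"
      and JD: "(\<Sum>k<N. real (N - k) / real N * ltilde f l ls lam (traj f u z k) (u k)) \<le> D"
    have Npos: "N > 0" using N by (simp add: N1_def)
    define x where "x k = traj f u z k" for k
    have xX: "x k \<in> X" if "k \<le> N" for k using u that by (auto simp: adm_def x_def)
    have uU: "u k \<in> U" if "k < N" for k using u that by (auto simp: adm_def)
    have xS: "x (Suc k) = f (x k) (u k)" for k by (simp add: x_def)
    define g where "g k = (k < N \<and> orbit_dist p Ps (x k, u k) \<le> \<epsilon>)" for k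
    define j where "j k = (SOME i. i < p \<and> norm ((x k, u k) - Ps i) \<le> \<epsilon>)" for k
    have jg: "j k < p \<and> norm ((x k, u k) - Ps (j k)) \<le> \<epsilon>" if "g k" for k
    proof -
      have "\<exists>i. i < p \<and> norm ((x k, u k) - Ps i) \<le> \<epsilon>" using that orbit_dist_le_iff[OF p0, of Ps "(x k, u k)" \<epsilon>] by (simp add: g_def)
      thus ?thesis unfolding j_def by (rule someI_ex)
    qed
    have tb: "\<bar>(\<Sum>k<N. lam (x k)) - real N * (\<Sum>i<p. L i) / real p\<bar>
     \<le> (\<Sum>i<p. \<bar>L i - (\<Sum>i<p. L i) / real p\<bar>) + real N * om \<epsilon>
       + (2 * lbar + 2 * (\<Sum>i<p. \<bar>L i - (\<Sum>i<p. L i) / real p\<bar>)) * (2 * real (card {k. k < N \<and> \<not> g k}) + 1)"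
    proof (rule tele_bound[OF p0])
      show "\<And>k. g k \<Longrightarrow> k < N" by (simp add: g_def)
      show "\<And>k. g k \<Longrightarrow> j k < p" using jg by blast
      show "j (Suc k) = Suc (j k) mod p" if "g k" "g (Suc k)" for k
      proof (rule e0P[of "x k" "u k" "x (Suc k)"])
        show "(x k, u k) \<in> X \<times> U" using that xX uU by (auto simp: g_def)
        show "x (Suc k) = f (x k) (u k)" by (rule xS)
        show "j k < p" "j (Suc k) < p" using jg that by auto
        show "norm ((x k, u k) - Ps (j k)) \<le> e0" using jg[OF that(1)] by (simp add: \<epsilon>_def)
        have "norm (x (Suc k) - fst (Ps (j (Suc k)))) \<le> norm ((x (Suc k), u (Suc k)) - Ps (j (Suc k)))"
          using norm_fst_diff[of "(x (Suc k), u (Suc k))" "Ps (j (Suc k))"] by simp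
        thus "norm (x (Suc k) - fst (Ps (j (Suc k)))) \<le> e0" using jg[OF that(2)] by (simp add: \<epsilon>_def)
      qed
      show "\<bar>lam (x k) - L (j k)\<bar> \<le> om \<epsilon>" if "g k" for k
      proof -
        have "norm (x k - fst (Ps (j k))) \<le> norm ((x k, u k) - Ps (j k))"
          using norm_fst_diff[of "(x k, u k)" "Ps (j k)"] by simp
        hence nk: "norm (x k - fst (Ps (j k))) \<le> \<epsilon>" using jg[OF that] by simp
        have "\<bar>lam (x k) - L (j k)\<bar> \<le> om (norm (x k - fst (Ps (j k))))"
          using om xX[of k] jg[OF that] that by (auto simp: L_def g_def)
        also have "\<dots> \<le> om \<epsilon>" by (rule Kinf_mono[OF omK _ nk]) simp
        finally show ?thesis .
      qed
      show "om \<epsilon> \<ge> 0" by (rule ome0)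
      show "\<bar>lam (x k)\<bar> \<le> lbar" if "k < N" for k using lamb xX that by simp
      show "\<bar>L i\<bar> \<le> lbar" if "i < p" for i using lamb PsXU[OF that] by (auto simp: L_def)
    qed
    hence tb': "\<bar>(\<Sum>k<N. lam (x k)) - real N * S / real p\<bar> \<le> Phi + real N * om \<epsilon> + K * (2 * real (card {k. k < N \<and> \<not> g k}) + 1)"
      by (simp add: S_def Phi_def K_def)
    define a where "a k = a3 (orbit_dist p Ps (x k, u k))" for k
    have bc: "real (card {k. k < N \<and> \<not> g k}) \<le> real m + D * real N / (real m * ae)"
    proof (rule bad_count[OF Npos m0 _ _ ae0, of a])
      show "a k \<ge> 0" for k unfolding a_def by (rule Kinf_nonneg[OF a3K orbit_dist_nonneg[OF p0]])
      have "(\<Sum>k<N. real (N - k) / real N * a k) \<le> (\<Sum>k<N. real (N - k) / real N * ltilde f l ls lam (traj f u z k) (u k))"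
      proof (rule sum_mono)
        fix k assume k: "k \<in> {..<N}"
        have "a k \<le> ltilde f l ls lam (x k) (u k)"
          using a3 xX[of k] uU[of k] xX[of "Suc k"] xS[of k] k by (auto simp: a_def)
        thus "real (N - k) / real N * a k \<le> real (N - k) / real N * ltilde f l ls lam (traj f u z k) (u k)"
          by (intro mult_left_mono) (auto simp: x_def)
      qed
      thus "(\<Sum>k<N. real (N - k) / real N * a k) \<le> D" using JD by linarith
      show "ae \<le> a k" if "k < N" "\<not> g k" for k
      proof -
        have "\<epsilon> \<le> orbit_dist p Ps (x k, u k)" using that by (auto simp: g_def)
        thus ?thesis unfolding a_def ae_def using Kinf_mono[OF a3K] eps0 by simp
      qed
    qed
    define B where "B = real (card {k. k < N \<and> \<not> g k})"
    define T where "T = (\<Sum>k<N. lam (x k))"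
    have shift: "(\<Sum>k<N. lam (x (Suc k))) = T + lam (x N) - lam (x 0)"
    proof -
      have "(\<Sum>k<N. lam (x (Suc k)) - lam (x k)) = lam (x N) - lam (x 0)" by (rule sum_lessThan_telescope)
      thus ?thesis by (simp add: T_def sum_subtractf)
    qed
    have "\<bar>lam (x N)\<bar> \<le> lbar" "\<bar>lam (x 0)\<bar> \<le> lbar" using lamb xX[of N] xX[of 0] by auto
    hence bnd2: "\<bar>lam (x N) - lam (x 0)\<bar> \<le> 2 * lbar" by linarith
    have eqA: "(1 / real N) * (\<Sum>k<N. lam (traj f u z (Suc k))) - S / real p
        = ((T - real N * S / real p) + (lam (x N) - lam (x 0))) / real N"
      using shift Npos by (simp add: x_def field_simps)
    have m1: "\<bar>(T - real N * S / real p) + (lam (x N) - lam (x 0))\<bar> \<le> Phi + real N * om \<epsilon> + K * (2 * B + 1) + 2 * lbar"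
      using tb' bnd2 unfolding T_def B_def by linarith
    have m2: "K * (2 * B + 1) \<le> K * (2 * (real m + D * real N / (real m * ae)) + 1)"
      using bc K0 unfolding B_def by (intro mult_left_mono) auto
    have m3: "Phi + real N * om \<epsilon> + K * (2 * (real m + D * real N / (real m * ae)) + 1) + 2 * lbar
       = R + real N * (om \<epsilon> + 2 * K * D / (real m * ae))"
      using m0 ae0 by (simp add: R_def field_simps)
    have main: "\<bar>(T - real N * S / real p) + (lam (x N) - lam (x 0))\<bar> \<le> R + real N * (om \<epsilon> + 2 * K * D / (real m * ae))"
      using m1 m2 m3 by linarith
    have "\<bar>(1 / real N) * (\<Sum>k<N. lam (traj f u z (Suc k))) - S / real p\<bar>
        = \<bar>(T - real N * S / real p) + (lam (x N) - lam (x 0))\<bar> / real N" using eqA by simp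
    also have "\<dots> \<le> (R + real N * (om \<epsilon> + 2 * K * D / (real m * ae))) / real N"
      using main Npos by (intro divide_right_mono) auto
    also have "\<dots> = R / real N + (om \<epsilon> + 2 * K * D / (real m * ae))" using Npos by (simp add: field_simps)
    also have "R / real N \<le> R / real N1" using R0 N by (intro divide_left_mono) (auto simp: N1_def)
    finally have "\<bar>(1 / real N) * (\<Sum>k<N. lam (traj f u z (Suc k))) - S / real p\<bar> \<le> R / real N1 + (om \<epsilon> + 2 * K * D / (real m * ae))"
      by linarith
    thus "\<bar>(1 / real N) * (\<Sum>k<N. lam (traj f u z (Suc k))) - (\<Sum>i<p. lam (fst (Ps i))) / real p\<bar> \<le> \<tau>"
      using N1R ome mbound unfolding S_def L_def by linarith
  qed
qed



theorem lemma29: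
  fixes f :: "'x::euclidean_space \<Rightarrow> 'u::euclidean_space \<Rightarrow> 'x"
    and X :: "'x set" and U :: "'u set" and l :: "'x \<Rightarrow> 'u \<Rightarrow> real"
    and lam :: "'x \<Rightarrow> real" and lbar :: real
    and ps :: nat and Ps :: "nat \<Rightarrow> 'x \<times> 'u" and C :: real
  assumes l_nonneg: "\<And>x u. x \<in> X \<Longrightarrow> u \<in> U \<Longrightarrow> l x u \<ge> 0"
    and A1: "continuous_on (X \<times> U) (\<lambda>(x, u). f x u)" "continuous_on (X \<times> U) (\<lambda>(x, u). l x u)"
            "compact X" "compact U"
    and Ps_feas: "feasible_orbit f X U ps Ps"
    and Ps_opt: "orbit_avg l ps Ps = lstar f X U l"
    and Ps_min: "minimal_orbit ps Ps"
    and A3: "(\<forall>x\<in>X. \<bar>lam x\<bar> \<le> lbar) \<and>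
             (\<exists>a. class_Kinf a \<and> (\<forall>x\<in>X. \<forall>u\<in>U. f x u \<in> X \<longrightarrow>
                 ltilde f l (lstar f X U l) lam x u \<ge> a (orbit_dist ps Ps (x, u))))"
    and A4: "\<exists>\<kappa>>0. \<exists>M::nat. \<exists>\<rho>. class_Kinf \<rho> \<and>
             (\<forall>j<ps. \<forall>x\<in>X. \<forall>y\<in>X. norm (x - fst (Ps j)) \<le> \<kappa> \<longrightarrow> norm (y - fst (Ps j)) \<le> \<kappa> \<longrightarrow>
               (\<exists>u\<in>adm f X U M x. traj f u x M = y \<and>
                  (\<forall>k<M. orbit_dist ps Ps (traj f u x k, u k)
                      \<le> \<rho> (max (orbit_state_dist ps Ps x) (orbit_state_dist ps Ps y)))))"
    and A15: "continuous_on X lam \<and>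
             (\<exists>a. class_Kinf a \<and> (\<forall>x\<in>X. \<forall>k<ps. \<bar>lam x - lam (fst (Ps k))\<bar> \<le> a (norm (x - fst (Ps k)))))"
  shows "\<exists>N0::nat. \<exists>\<delta>2. class_L \<delta>2 \<and>
     (\<forall>x\<in>Xpi f X U l lam lbar C N0. \<forall>y\<in>Xpi f X U l lam lbar C N0. \<forall>N\<ge>N0.
        Vbeta f X U (ltilde f l (lstar f X U l) lam) N y - lam y
          - Vbeta f X U (ltilde f l (lstar f X U l) lam) N x + lam x
        \<le> Vbeta f X U l N y - Vbeta f X U l N x + \<delta>2 (real N))"
proof -
  obtain a3 where a3K: "class_Kinf a3" and a3: "\<forall>x\<in>X. \<forall>u\<in>U. f x u \<in> X \<longrightarrow>
                 ltilde f l (lstar f X U l) lam x u \<ge> a3 (orbit_dist ps Ps (x, u))"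
    using A3 by blast
  have lamb: "\<forall>x\<in>X. \<bar>lam x\<bar> \<le> lbar" using A3 by blast
  obtain om where omK: "class_Kinf om" and om: "\<forall>x\<in>X. \<forall>k<ps. \<bar>lam x - lam (fst (Ps k))\<bar> \<le> om (norm (x - fst (Ps k)))"
    using A15 by blast
  have p0: "ps > 0" and PsXU: "\<And>k. k < ps \<Longrightarrow> Ps k \<in> X \<times> U"
    using Ps_feas by (auto simp: feasible_orbit_def)
  have lb0: "lbar \<ge> 0" using lamb PsXU[OF p0] by force
  define ls where "ls = lstar f X U l"
  define lt where "lt = ltilde f l ls lam"
  define Jl where "Jl N z u = (\<Sum>k<N. real (N - k) / real N * l (traj f u z k) (u k))" for N z u
  define Jt where "Jt N z u = (\<Sum>k<N. real (N - k) / real N * lt (traj f u z k) (u k))" for N z u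
  define Av where "Av N z u = (1 / real N) * (\<Sum>k<N. lam (traj f u z (Suc k)))" for N z u
  define Sp where "Sp = (\<Sum>i<ps. lam (fst (Ps i))) / real ps"
  define D where "D = \<bar>C\<bar> + 1"
  have D0: "D \<ge> 0" by (simp add: D_def)
  have VlI: "Vbeta f X U l N z = Inf (Jl N z ` adm f X U N z)" for N z by (simp add: Vbeta_def Jl_def)
  have VtI: "Vbeta f X U lt N z = Inf (Jt N z ` adm f X U N z)" for N z by (simp add: Vbeta_def Jt_def)
  have trajX: "traj f u z k \<in> X" if "u \<in> adm f X U N z" "k \<le> N" for u z k N
    using that by (auto simp: adm_def)
  have uU: "u k \<in> U" if "u \<in> adm f X U N z" "k < N" for u z k N
    using that by (auto simp: adm_def)
  have Jl0: "Jl N z u \<ge> 0" if "u \<in> adm f X U N z" for N z u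
    unfolding Jl_def using l_nonneg trajX[OF that] uU[OF that]
    by (intro sum_nonneg mult_nonneg_nonneg) auto
  have Jt0: "Jt N z u \<ge> 0" if "u \<in> adm f X U N z" for N z u
    unfolding Jt_def
  proof (intro sum_nonneg mult_nonneg_nonneg)
    fix k assume k: "k \<in> {..<N}"
    have "f (traj f u z k) (u k) \<in> X" using trajX[OF that, of "Suc k"] k by simp
    hence "a3 (orbit_dist ps Ps (traj f u z k, u k)) \<le> lt (traj f u z k) (u k)"
      using a3 trajX[OF that, of k] uU[OF that, of k] k by (auto simp: lt_def ls_def)
    moreover have "a3 (orbit_dist ps Ps (traj f u z k, u k)) \<ge> 0"
      by (rule Kinf_nonneg[OF a3K orbit_dist_nonneg[OF p0]])
    ultimately show "lt (traj f u z k) (u k) \<ge> 0" by linarith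
  qed simp
  have ident: "Jt N z u = Jl N z u - ls * (real N + 1) / 2 + lam z - Av N z u" if "N > 0" for N z u
  proof -
    have "Jt N z u = (\<Sum>k<N. real (N - k) / real N * l (traj f u z k) (u k) - ls * (real (N - k) / real N)
         + real (N - k) / real N * (lam (traj f u z k) - lam (traj f u z (Suc k))))"
      unfolding Jt_def lt_def ltilde_def by (intro sum.cong) (auto simp: algebra_simps)
    also have "\<dots> = Jl N z u - ls * (\<Sum>k<N. real (N - k) / real N)
         + (\<Sum>k<N. real (N - k) / real N * (lam (traj f u z k) - lam (traj f u z (Suc k))))"
      unfolding Jl_def by (simp add: sum.distrib sum_subtractf sum_distrib_left)
    also have "(\<Sum>k<N. real (N - k) / real N) = (real N + 1) / 2" by (rule weight_sum_N[OF that])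
    also have "(\<Sum>k<N. real (N - k) / real N * (lam (traj f u z k) - lam (traj f u z (Suc k))))
        = lam (traj f u z 0) - (1 / real N) * (\<Sum>k<N. lam (traj f u z (Suc k)))"
      by (rule weighted_telescope_N[OF that])
    finally show ?thesis by (simp add: Av_def)
  qed
  have Avb: "\<bar>Av N z u\<bar> \<le> lbar" if "u \<in> adm f X U N z" for N z u
  proof (cases "N = 0")
    case True thus ?thesis using lb0 by (simp add: Av_def)
  next
    case False
    have "\<bar>\<Sum>k<N. lam (traj f u z (Suc k))\<bar> \<le> (\<Sum>k<N. \<bar>lam (traj f u z (Suc k))\<bar>)" by (rule sum_abs)
    also have "\<dots> \<le> (\<Sum>k<N. lbar)"
    proof (rule sum_mono)
      fix k assume k: "k \<in> {..<N}"
      have "traj f u z (Suc k) \<in> X" using trajX[OF that, of "Suc k"] k by (simp del: traj.simps)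
      thus "\<bar>lam (traj f u z (Suc k))\<bar> \<le> lbar" using lamb by blast
    qed
    finally show ?thesis using False by (simp add: Av_def field_simps)
  qed
  have XpiD: "x \<in> X \<and> adm f X U N x \<noteq> {} \<and> Vbeta f X U l N x - (real N + 1) / 2 * ls + lam x + lbar \<le> C"
    if "x \<in> Xpi f X U l lam lbar C 1" "N \<ge> 1" for x N
    using that by (auto simp: Xpi_def ls_def)
  have bddl: "bdd_below (Jl N z ` adm f X U N z)" for N z
    unfolding bdd_below_def using Jl0 by auto
  have bddt: "bdd_below (Jt N z ` adm f X U N z)" for N z
    unfolding bdd_below_def using Jt0 by auto
  have comb: "\<exists>ux\<in>adm f X U N x. \<exists>uy\<in>adm f X U N y. Jt N x ux \<le> D \<and> Jt N y uy \<le> D \<and>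
      Vbeta f X U lt N y - lam y - Vbeta f X U lt N x + lam x - (Vbeta f X U l N y - Vbeta f X U l N x)
        \<le> Av N x ux - Av N y uy + 2 * e"
    if x: "x \<in> Xpi f X U l lam lbar C 1" and y: "y \<in> Xpi f X U l lam lbar C 1" and N: "N \<ge> 1"
      and e: "0 < e" "e \<le> 1 / 2" for N x y e
  proof -
    have Npos: "N > 0" using N by simp
    note xD = XpiD[OF x N] and yD = XpiD[OF y N]
    define cN where "cN = ls * (real N + 1) / 2"
    have xC: "Vbeta f X U l N x - cN + lam x + lbar \<le> C" using xD by (simp add: cN_def algebra_simps)
    have yC: "Vbeta f X U l N y - cN + lam y + lbar \<le> C" using yD by (simp add: cN_def algebra_simps)
    obtain uy where uy: "uy \<in> adm f X U N y" and uyl: "Jl N y uy < Vbeta f X U l N y + e"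
      using cInf_lessD[of "Jl N y ` adm f X U N y" "Vbeta f X U l N y + e"] yD e unfolding VlI by auto
    have idy: "Jt N y uy = Jl N y uy - cN + lam y - Av N y uy" using ident[OF Npos] by (simp add: cN_def)
    have Jty: "Jt N y uy \<le> D" using idy uyl yC Avb[OF uy] e abs_ge_self[of C] unfolding D_def by linarith
    have Vty: "Vbeta f X U lt N y \<le> Jt N y uy" unfolding VtI using uy bddt by (intro cInf_lower) auto
    obtain u1 where u1: "u1 \<in> adm f X U N x" and u1l: "Jl N x u1 < Vbeta f X U l N x + e"
      using cInf_lessD[of "Jl N x ` adm f X U N x" "Vbeta f X U l N x + e"] xD e unfolding VlI by auto
    have id1: "Jt N x u1 = Jl N x u1 - cN + lam x - Av N x u1" using ident[OF Npos] by (simp add: cN_def)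
    have Vtx1: "Vbeta f X U lt N x \<le> Jt N x u1" unfolding VtI using u1 bddt by (intro cInf_lower) auto
    have Vtx1': "Vbeta f X U lt N x \<le> C + e" using Vtx1 id1 u1l xC Avb[OF u1] by linarith
    have nex: "Jt N x ` adm f X U N x \<noteq> {}" using xD by auto
    obtain ux where ux: "ux \<in> adm f X U N x" and uxl: "Jt N x ux < Vbeta f X U lt N x + e"
      using cInf_lessD[OF nex, of "Vbeta f X U lt N x + e"] e unfolding VtI by auto
    have Jtx: "Jt N x ux \<le> D" using uxl Vtx1' e abs_ge_self[of C] unfolding D_def by linarith
    have idx: "Jt N x ux = Jl N x ux - cN + lam x - Av N x ux" using ident[OF Npos] by (simp add: cN_def)
    have Vlx: "Vbeta f X U l N x \<le> Jl N x ux" unfolding VlI using ux bddl by (intro cInf_lower) auto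
    show ?thesis
      by (intro bexI[OF _ ux] bexI[OF _ uy] conjI Jtx Jty)
         (use Vty idy uyl uxl idx Vlx in linarith)
  qed
  define P where "P N v = (N \<ge> 1 \<and> (\<exists>x\<in>Xpi f X U l lam lbar C 1. \<exists>y\<in>Xpi f X U l lam lbar C 1.
      v = Vbeta f X U lt N y - lam y - Vbeta f X U lt N x + lam x - (Vbeta f X U l N y - Vbeta f X U l N x)))" for N v
  have PB: "v \<le> 2 * lbar" if Pv: "P N v" for N v
  proof (rule field_le_epsilon)
    fix t :: real assume t: "t > 0"
    obtain x y where N: "N \<ge> 1" and x: "x \<in> Xpi f X U l lam lbar C 1" and y: "y \<in> Xpi f X U l lam lbar C 1"
      and v: "v = Vbeta f X U lt N y - lam y - Vbeta f X U lt N x + lam x - (Vbeta f X U l N y - Vbeta f X U l N x)"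
      using Pv unfolding P_def by blast
    define e where "e = min (t / 2) (1 / 2)"
    have e: "0 < e" "e \<le> 1 / 2" "2 * e \<le> t" using t by (auto simp: e_def)
    obtain ux uy where ux: "ux \<in> adm f X U N x" and uy: "uy \<in> adm f X U N y"
      and le: "v \<le> Av N x ux - Av N y uy + 2 * e"
      using comb[OF x y N e(1,2)] v by blast
    show "v \<le> 2 * lbar + t" using le Avb[OF ux] Avb[OF uy] e by linarith
  qed
  have Plim: "\<exists>N1. \<forall>N\<ge>N1. \<forall>v. P N v \<longrightarrow> v \<le> \<tau>" if tau: "\<tau> > 0" for \<tau>
  proof -
    obtain N1 where N1: "N1 > 0" and N1P: "\<forall>N\<ge>N1. \<forall>z\<in>X. \<forall>u\<in>adm f X U N z.
     (\<Sum>k<N. real (N - k) / real N * ltilde f l ls lam (traj f u z k) (u k)) \<le> D \<longrightarrow>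
     \<bar>(1 / real N) * (\<Sum>k<N. lam (traj f u z (Suc k))) - (\<Sum>i<ps. lam (fst (Ps i))) / real ps\<bar> \<le> \<tau> / 2"
      using avg_estimate[OF A1(1) A1(3) A1(4) Ps_feas Ps_min lamb a3K _ omK om D0, of l ls "\<tau> / 2"] a3 tau
      unfolding ls_def by auto
    have N1P': "\<bar>Av N z u - Sp\<bar> \<le> \<tau> / 2" if "N \<ge> N1" "z \<in> X" "u \<in> adm f X U N z" "Jt N z u \<le> D" for N z u
      using N1P that unfolding Av_def Sp_def Jt_def lt_def by auto
    show ?thesis
    proof (intro exI[of _ N1] allI impI)
      fix N v assume N: "N1 \<le> N" and Pv: "P N v"
      obtain x y where N1': "N \<ge> 1" and x: "x \<in> Xpi f X U l lam lbar C 1" and y: "y \<in> Xpi f X U l lam lbar C 1"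
        and v: "v = Vbeta f X U lt N y - lam y - Vbeta f X U lt N x + lam x - (Vbeta f X U l N y - Vbeta f X U l N x)"
        using Pv unfolding P_def by blast
      show "v \<le> \<tau>"
      proof (rule field_le_epsilon)
        fix t :: real assume t: "t > 0"
        define e where "e = min (t / 2) (1 / 2)"
        have e: "0 < e" "e \<le> 1 / 2" "2 * e \<le> t" using t by (auto simp: e_def)
        obtain ux uy where ux: "ux \<in> adm f X U N x" and uy: "uy \<in> adm f X U N y"
          and Jx: "Jt N x ux \<le> D" and Jy: "Jt N y uy \<le> D"
          and le: "v \<le> Av N x ux - Av N y uy + 2 * e"
          using comb[OF x y N1' e(1,2)] v by blast
        have "\<bar>Av N x ux - Sp\<bar> \<le> \<tau> / 2" using N1P'[OF N _ ux Jx] XpiD[OF x N1'] by blast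
        moreover have "\<bar>Av N y uy - Sp\<bar> \<le> \<tau> / 2" using N1P'[OF N _ uy Jy] XpiD[OF y N1'] by blast
        ultimately show "v \<le> \<tau> + t" using le e by linarith
      qed
    qed
  qed
  obtain \<delta> where dL: "class_L \<delta>" and dP: "\<forall>N v. P N v \<longrightarrow> v \<le> \<delta> (real N)"
    using L_exists[of "2 * lbar" P] lb0 PB Plim by auto
  show ?thesis
  proof (intro exI[of _ "1::nat"] exI[of _ \<delta>] conjI dL ballI allI impI)
    fix x y and N :: nat assume x: "x \<in> Xpi f X U l lam lbar C 1" and y: "y \<in> Xpi f X U l lam lbar C 1" and N: "1 \<le> N"
    have "P N (Vbeta f X U lt N y - lam y - Vbeta f X U lt N x + lam x - (Vbeta f X U l N y - Vbeta f X U l N x))"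
      unfolding P_def using x y N by blast
    hence "Vbeta f X U lt N y - lam y - Vbeta f X U lt N x + lam x - (Vbeta f X U l N y - Vbeta f X U l N x) \<le> \<delta> (real N)"
      using dP by blast
    thus "Vbeta f X U (ltilde f l (lstar f X U l) lam) N y - lam y
          - Vbeta f X U (ltilde f l (lstar f X U l) lam) N x + lam x
        \<le> Vbeta f X U l N y - Vbeta f X U l N x + \<delta> (real N)"
      unfolding lt_def ls_def by linarith
  qed
qed


end
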